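(* Let $0<q<1$, $Q=1/q$. For every $n\ge2$, \[ F_n=\sum_{k=2}^n\binom nk(-1)^k\left[\frac{k-1}{Q^{k-1}-1}-\frac{k}{Q^k-1}\right], \] where $F_n$ is the expected number of letters strictly to the left of the last left-to-right maximum (i.e. of the first occurrence of the maximal letter) in a random word of length $n$.
   Context: Words $a_1\dots a_n$ have independent letters with $\mathbb P\{a_i=k\}=pq^{k-1}$, $k\ge1$, $p=1-q$. An index $i$ is a left-to-right maximum if $a_i>a_j$ for all $j<i$; the last left-to-right maximum is the index of the first occurrence of $\max_j a_j$. *)

theory Defs
  imports "HOL-Analysis.Analysis"
begin

definition word_prob :: "real \<Rightarrow> nat list \<Rightarrow> real" where
  "word_prob q w = (\<Prod>k\<leftarrow>w. (1 - q) * q ^ (k - 1))"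

definition words :: "nat \<Rightarrow> nat list set" where
  "words n = {w. length w = n \<and> (\<forall>x\<in>set w. 1 \<le> x)}"

definition left_of_last_ltr_max :: "nat list \<Rightarrow> nat" where
  "left_of_last_ltr_max w = (LEAST i. i < length w \<and> w ! i = Max (set w))"

definition F :: "real \<Rightarrow> nat \<Rightarrow> real" where
  "F q n = (\<Sum>\<^sub>\<infinity>w\<in>words n. word_prob q w * real (left_of_last_ltr_max w))"

end

theory Submission
  imports Defs
begin


lemma L1: "(\<Sum>k\<le>n. real (n choose k) * (-1)^k * u^k) = (1-u)^n"
proof -
  have "(-u + 1)^n = (\<Sum>k\<le>n. real (n choose k) * (-u)^k * 1^(n-k))"
    by (rule binomial_ring)
  then show ?thesis by (simp add: power_minus[of u] mult.assoc)
qed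

lemma L2: "(\<Sum>k\<le>n. real (n choose k) * (-1)^k * real k * u^k) = - real n * u * (1-u)^(n-1)"
proof (cases n)
  case 0 then show ?thesis by simp
next
  case (Suc m)
  have "(\<Sum>k\<le>n. real (n choose k) * (-1)^k * real k * u^k)
      = (\<Sum>k\<le>m. real (Suc m choose Suc k) * (-1)^(Suc k) * real (Suc k) * u^(Suc k))"
    unfolding Suc by (subst sum.atMost_Suc_shift) simp
  also have "\<dots> = (\<Sum>k\<le>m. - real (Suc m) * u * (real (m choose k) * (-1)^k * u^k))"
  proof (rule sum.cong[OF refl])
    fix k
    have "real (Suc k) * real (Suc m choose Suc k) = real (Suc m) * real (m choose k)"
      using Suc_times_binomial[of k m] by (metis of_nat_mult)
    then have e: "real (Suc k) * real (Suc m choose Suc k) = real (Suc m) * real (m choose k)" .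
    have "real (Suc m choose Suc k) * (-1)^(Suc k) * real (Suc k) * u^(Suc k) =
       (real (Suc k) * real (Suc m choose Suc k)) * ((-1)^(Suc k) * u^(Suc k))" by (simp only: mult_ac)
    also have "\<dots> = real (Suc m) * real (m choose k) * ((-1)^(Suc k) * u^(Suc k))" by (simp only: e)
    also have "\<dots> = - real (Suc m) * u * (real (m choose k) * (-1)^k * u^k)" by (simp add: algebra_simps)
    finally show "real (Suc m choose Suc k) * (-1)^(Suc k) * real (Suc k) * u^(Suc k) =
       - real (Suc m) * u * (real (m choose k) * (-1)^k * u^k)" .
  qed
  also have "\<dots> = - real (Suc m) * u * (1-u)^m"
    by (simp add: sum_distrib_left[symmetric] L1)
  finally show ?thesis using Suc by simp
qed

definition phi :: "nat \<Rightarrow> real \<Rightarrow> real" where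
  "phi n u = (\<Sum>k=2..n. real (n choose k) * (-1) ^ k * (real (k - 1) * u^(k-1) - real k * u^k))"

lemma split01: "1 \<le> n \<Longrightarrow> (\<Sum>k\<le>n. g k) = g 0 + g 1 + (\<Sum>k=2..(n::nat). g k)"
proof -
  assume "1 \<le> n"
  then have "{..n} = insert 0 (insert 1 {2..n})" by auto
  then show ?thesis by (simp add: add.assoc)
qed

lemma phi_closed:
  assumes "u \<noteq> 0" "1 \<le> n"
  shows "phi n u = - real n * (1-u)^n + (1 - (1-u)^n) / u - real n * u"
proof -
  define A where "A = (\<Sum>k=2..n. real (n choose k) * (-1) ^ k * (real (k - 1) * u^(k-1)))"
  define B where "B = (\<Sum>k=2..n. real (n choose k) * (-1) ^ k * (real k * u^k))"
  have phiAB: "phi n u = A - B" unfolding phi_def A_def B_def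
    by (simp add: right_diff_distrib sum_subtractf)
  have B: "B = - real n * u * (1-u)^(n-1) + real n * u"
    using L2[of n u] split01[OF assms(2), of "\<lambda>k. real (n choose k) * (-1)^k * real k * u^k"]
    unfolding B_def by (simp add: mult.assoc)
  have "u * A = (\<Sum>k=2..n. real (n choose k) * (-1) ^ k * (real k - 1) * u^k)"
    unfolding A_def sum_distrib_left
  proof (rule sum.cong[OF refl])
    fix k assume "k \<in> {2..n}"
    then obtain j where "k = Suc j" "1 \<le> j" by (cases k) auto
    then show "u * (real (n choose k) * (-1) ^ k * (real (k - 1) * u ^ (k - 1))) =
         real (n choose k) * (-1) ^ k * (real k - 1) * u ^ k" by (simp add: algebra_simps)
  qed
  also have "\<dots> = (\<Sum>k\<le>n. real (n choose k) * (-1)^k * real k * u^k) - (\<Sum>k\<le>n. real (n choose k) * (-1)^k * u^k) + 1"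
    using split01[OF assms(2), of "\<lambda>k. real (n choose k) * (-1)^k * real k * u^k"]
      split01[OF assms(2), of "\<lambda>k. real (n choose k) * (-1)^k * u^k"]
    by (simp add: algebra_simps sum_subtractf)
  also have "\<dots> = - real n * u * (1-u)^(n-1) - (1-u)^n + 1" by (simp add: L1 L2)
  finally have uA: "u * A = - real n * u * (1-u)^(n-1) - (1-u)^n + 1" .
  obtain m where m: "n = Suc m" using assms(2) by (cases n) auto
  have "A = - real n * (1-u)^(n-1) + (1 - (1-u)^n) / u"
    using uA assms(1) by (simp add: field_simps)
  then show ?thesis using phiAB B m by (simp add: algebra_simps)
qed



definition Cf :: "real \<Rightarrow> nat \<Rightarrow> nat \<Rightarrow> real" where
  "Cf q n m = ((1 - q^m)^(n+1) - (1 - q^(m-1))^(n+1)) / ((1 - q^m) - (1 - q^(m-1)))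
      - (1 - q^m)^n - real n * (1 - q^(m-1))^n"

definition hh :: "real \<Rightarrow> nat \<Rightarrow> nat \<Rightarrow> real" where
  "hh q n j = - real n * (1 - q^j)^n + (\<Sum>i\<le>n. (1 - q^j)^i) / (1 - q)"

lemma gsum: "z \<noteq> 1 \<Longrightarrow> (\<Sum>i\<le>n. (z::real)^i) = (1 - z^(Suc n)) / (1 - z)"
  using sum_gp_basic[of z n] by (simp add: field_simps)

lemma perm_identity:
  assumes q: "0 < q" "q < 1" and n: "1 \<le> n"
  shows "Cf q n (Suc j) = phi n (q^Suc j) + real n * q^Suc j + (hh q n j - hh q n (Suc j))"
proof -
  define x where "x = q^j"
  have x: "0 < x" "x \<le> 1" using q unfolding x_def by (auto simp: power_le_one)
  have qx: "0 < q*x" "q * x < 1" using x q by (auto simp: mult_less_le_imp_less[of q 1 x 1, simplified])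
  define a where "a = 1 - x"
  define b where "b = 1 - q*x"
  define A where "A = a^n"
  define Bn where "Bn = b^n"
  have Ga: "(\<Sum>i\<le>n. a^i) = (1 - a*A) / x" using gsum[of a n] x unfolding a_def A_def by simp
  have Gb: "(\<Sum>i\<le>n. b^i) = (1 - b*Bn) / (q*x)" using gsum[of b n] qx q x unfolding b_def Bn_def by simp
  have ph: "phi n (q*x) = - real n * Bn + (1 - Bn) / (q*x) - real n * (q*x)"
    using phi_closed[of "q*x" n] qx q x n unfolding Bn_def b_def by simp
  have C: "Cf q n (Suc j) = (b*Bn - a*A) / (b - a) - Bn - real n * A"
    unfolding Cf_def a_def b_def A_def Bn_def x_def by (simp add: mult.commute)
  have H0: "hh q n j = - real n * A + (1 - a*A) / x / (1-q)"
  proof -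
    have "hh q n j = - real n * A + (\<Sum>i\<le>n. a^i) / (1-q)" by (simp add: hh_def a_def A_def x_def)
    then show ?thesis by (simp only: Ga)
  qed
  have H1: "hh q n (Suc j) = - real n * Bn + (1 - b*Bn) / (q*x) / (1-q)"
  proof -
    have "hh q n (Suc j) = - real n * Bn + (\<Sum>i\<le>n. b^i) / (1-q)" by (simp add: hh_def b_def Bn_def x_def)
    then show ?thesis by (simp only: Gb)
  qed
  have ba: "b - a = x * (1 - q)" unfolding a_def b_def by (simp add: algebra_simps)
  have "(b*Bn - a*A) / (b - a) - Bn - real n * A =
        (- real n * Bn + (1 - Bn) / (q*x) - real n * (q*x)) + real n * (q*x) +
        ((- real n * A + (1 - a*A) / x / (1-q)) - (- real n * Bn + (1 - b*Bn) / (q*x) / (1-q)))"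
    unfolding ba a_def b_def using x q
    apply (simp add: divide_simps)
    apply (simp add: algebra_simps)
    done
  then show ?thesis using C H0 H1 ph by (simp add: x_def mult.commute)
qed



lemma geo_from1:
  assumes "0 < q" "q < (1::real)" "1 \<le> r"
  shows "(\<lambda>j. (q^Suc j)^r) sums (q^r / (1 - q^r))"
proof -
  have lt: "q^r < 1" using assms by (simp add: power_less_one_iff)
  have "(\<lambda>j. (q^r)^j) sums (1 / (1 - q^r))"
    by (rule geometric_sums) (use assms lt in auto)
  then have "(\<lambda>j. q^r * (q^r)^j) sums (q^r * (1 / (1 - q^r)))" by (rule sums_mult)
  then show ?thesis by (simp add: power_mult[symmetric] power_Suc mult.commute power_mult_distrib power_add)
qed

lemma series_main:
  assumes q: "0 < q" "q < 1" and n: "2 \<le> n"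
  shows "(\<lambda>j. Cf q n (Suc j)) sums (\<Sum>k=2..n. real (n choose k) * (-1) ^ k *
            (real (k - 1) / ((1/q) ^ (k - 1) - 1) - real k / ((1/q) ^ k - 1)))"
proof -
  have n1: "1 \<le> n" using n by simp
  define S1 where "S1 = (\<Sum>k=2..n. real (n choose k) * (-1) ^ k *
            (real (k - 1) * (q^(k-1) / (1 - q^(k-1))) - real k * (q^k / (1 - q^k))))"
  have s1: "(\<lambda>j. phi n (q^Suc j)) sums S1"
    unfolding phi_def S1_def
  proof (rule sums_sum)
    fix k assume k: "k \<in> {2..n}"
    have a: "(\<lambda>j. (q^Suc j)^(k-1)) sums (q^(k-1) / (1 - q^(k-1)))"
      using geo_from1[OF q, of "k-1"] k by auto
    have b: "(\<lambda>j. (q^Suc j)^k) sums (q^k / (1 - q^k))"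
      using geo_from1[OF q, of k] k by auto
    show "(\<lambda>j. real (n choose k) * (-1) ^ k * (real (k - 1) * (q^Suc j)^(k-1) - real k * (q^Suc j)^k))
      sums (real (n choose k) * (-1) ^ k * (real (k - 1) * (q^(k-1) / (1 - q^(k-1))) - real k * (q^k / (1 - q^k))))"
      by (intro sums_mult sums_diff a b)
  qed
  have s2: "(\<lambda>j. real n * q^Suc j) sums (real n * (q / (1 - q)))"
    using sums_mult[OF geo_from1[OF q, of 1]] by simp
  have lim: "hh q n \<longlonglongrightarrow> (- real n * (1 - 0)^n + (\<Sum>i\<le>n. (1 - 0)^i) / (1 - q))"
    unfolding hh_def[abs_def]
    by (intro tendsto_intros LIMSEQ_power_zero) (use q in auto)
  have s3: "(\<lambda>j. hh q n j - hh q n (Suc j)) sums (hh q n 0 - (- real n + real (Suc n) / (1 - q)))"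
    using telescope_sums'[OF lim] by simp
  have h0: "hh q n 0 = 1 / (1 - q)"
    using n1 by (simp add: hh_def sum.atMost_shift)
  have all: "(\<lambda>j. phi n (q^Suc j) + real n * q^Suc j + (hh q n j - hh q n (Suc j))) sums
     (S1 + real n * (q / (1 - q)) + (hh q n 0 - (- real n + real (Suc n) / (1 - q))))"
    by (intro sums_add s1 s2 s3)
  have eq1: "(\<lambda>j. Cf q n (Suc j)) = (\<lambda>j. phi n (q^Suc j) + real n * q^Suc j + (hh q n j - hh q n (Suc j)))"
    using perm_identity[OF q n1] by auto
  have eq2: "S1 + real n * (q / (1 - q)) + (hh q n 0 - (- real n + real (Suc n) / (1 - q))) = S1"
  proof -
    have "real n * (q / (1 - q)) + (1 / (1 - q) - (- real n + real (Suc n) / (1 - q))) = 0"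
      using q by (simp add: field_simps)
    then show ?thesis unfolding h0 by simp
  qed
  have eq3: "S1 = (\<Sum>k=2..n. real (n choose k) * (-1) ^ k *
            (real (k - 1) / ((1/q) ^ (k - 1) - 1) - real k / ((1/q) ^ k - 1)))"
    unfolding S1_def
  proof (rule sum.cong[OF refl])
    fix k assume k: "k \<in> {2..n}"
    have r: "q^r / (1 - q^r) = 1 / ((1/q)^r - 1)" if "1 \<le> r" for r :: nat
    proof -
      have "q^r < 1" using q that by (simp add: power_less_one_iff)
      moreover have "0 < q^r" using q by simp
      ultimately show ?thesis using q by (simp add: power_one_over field_simps)
    qed
    show "real (n choose k) * (-1) ^ k * (real (k - 1) * (q^(k-1) / (1 - q^(k-1))) - real k * (q^k / (1 - q^k))) =
        real (n choose k) * (-1) ^ k * (real (k - 1) / ((1/q) ^ (k - 1) - 1) - real k / ((1/q) ^ k - 1))"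
    proof -
      have e1: "q^(k-1)/(1-q^(k-1)) = 1/((1/q)^(k-1)-1)" using r[of "k-1"] k by auto
      have e2: "q^k/(1-q^k) = 1/((1/q)^k-1)" using r[of k] k by auto
      show ?thesis by (simp only: e1 e2 times_divide_eq_right mult_1_right)
    qed
  qed
  have "(\<lambda>j. Cf q n (Suc j)) sums S1" using all unfolding eq1[symmetric] eq2 .
  then show ?thesis unfolding eq3 .
qed



definition BB :: "nat \<Rightarrow> nat \<Rightarrow> nat list set" where
  "BB M n = {w. length w = n \<and> set w \<subseteq> {1..M}}"

definition pr :: "real \<Rightarrow> nat \<Rightarrow> real" where
  "pr q x = (1 - q) * q^(x - 1)"

lemma wp_Cons[simp]: "word_prob q (x # w) = pr q x * word_prob q w"
  by (simp add: word_prob_def pr_def)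

lemma wp_nonneg: "0 \<le> q \<Longrightarrow> q \<le> 1 \<Longrightarrow> 0 \<le> word_prob q w"
  unfolding word_prob_def by (induction w) auto

lemma finite_BB[simp]: "finite (BB M n)"
  unfolding BB_def using finite_lists_length_eq[of "{1..M}" n] by (simp add: conj_commute)

lemma sum_pr: "(\<Sum>x\<in>{1..M}. pr q x) = 1 - q^M"
proof (induction M)
  case 0 then show ?case by simp
next
  case (Suc M)
  have "{1..Suc M} = insert (Suc M) {1..M}" by auto
  then show ?case using Suc by (simp add: pr_def algebra_simps)
qed

lemma BB_Suc: "BB M (Suc n) = (\<lambda>(x,w). x # w) ` ({1..M} \<times> BB M n)"
  unfolding BB_def
proof (intro set_eqI iffI)
  fix w assume "w \<in> {w. length w = Suc n \<and> set w \<subseteq> {1..M}}"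
  then obtain x v where "w = x # v" "length v = n" "set v \<subseteq> {1..M}" "x \<in> {1..M}"
    by (cases w) auto
  then show "w \<in> (\<lambda>(x,w). x # w) ` ({1..M} \<times> {w. length w = n \<and> set w \<subseteq> {1..M}})" by force
qed auto

lemma sum_BB_Suc: "(\<Sum>w\<in>BB M (Suc n). f w) = (\<Sum>x\<in>{1..M}. \<Sum>w\<in>BB M n. f (x # w))"
proof -
  have inj: "inj_on (\<lambda>(x,w). x # w) ({1..M} \<times> BB M n)" by (auto simp: inj_on_def)
  have "(\<Sum>w\<in>BB M (Suc n). f w) = (\<Sum>p\<in>{1..M} \<times> BB M n. f ((\<lambda>(x,w). x # w) p))"
    unfolding BB_Suc by (rule sum.reindex[OF inj, unfolded comp_def])
  also have "\<dots> = (\<Sum>x\<in>{1..M}. \<Sum>w\<in>BB M n. f (x # w))"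
    unfolding sum.cartesian_product by (simp add: case_prod_unfold)
  finally show ?thesis .
qed

lemma sum_wp: "(\<Sum>w\<in>BB M n. word_prob q w) = (1 - q^M)^n"
proof (induction n)
  case 0
  have "BB M 0 = {[]}" by (auto simp: BB_def)
  then show ?case by (simp add: word_prob_def)
next
  case (Suc n)
  show ?case
    using sum_pr[of q M] by (simp add: sum_BB_Suc sum_distrib_left[symmetric] sum_distrib_right[symmetric] Suc)
qed

lemma BB_filter: assumes "1 \<le> M" shows "{w \<in> BB M n. M \<notin> set w} = BB (M - 1) n"
proof -
  have e: "{1..M} - {M} = {1..M-1}" using assms by auto
  have "set w \<subseteq> {1..M} \<and> M \<notin> set w \<longleftrightarrow> set w \<subseteq> {1..M} - {M}" for w :: "nat list" by blast
  then show ?thesis unfolding BB_def e by auto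
qed

lemma sum_wp_M:
  assumes "1 \<le> M"
  shows "(\<Sum>w\<in>BB M n. if M \<in> set w then word_prob q w else 0) = (1 - q^M)^n - (1 - q^(M-1))^n"
proof -
  have "(\<Sum>w\<in>BB M n. word_prob q w) = (\<Sum>w\<in>BB M n. if M \<in> set w then word_prob q w else 0)
        + (\<Sum>w\<in>BB M n. if M \<notin> set w then word_prob q w else 0)"
    unfolding sum.distrib[symmetric] by (rule sum.cong) auto
  also have "(\<Sum>w\<in>BB M n. if M \<notin> set w then word_prob q w else 0) = (\<Sum>w\<in>BB (M-1) n. word_prob q w)"
    by (simp add: sum.inter_filter[symmetric] BB_filter[OF assms])
  finally show ?thesis by (simp add: sum_wp)
qed

abbreviation LL where "LL \<equiv> left_of_last_ltr_max"

lemma LL_single: "LL [x] = 0"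
  unfolding left_of_last_ltr_max_def by (rule Least_equality) auto

lemma LL_Cons:
  assumes "w \<noteq> []"
  shows "LL (x # w) = (if Max (set w) \<le> x then 0 else Suc (LL w))"
proof -
  have fin: "finite (set w)" "set w \<noteq> {}" using assms by auto
  have mx: "Max (set (x # w)) = max x (Max (set w))" using fin by simp
  show ?thesis
  proof (cases "Max (set w) \<le> x")
    case True
    then have "Max (set (x # w)) = x" using mx by simp
    then have "LL (x # w) = 0" unfolding left_of_last_ltr_max_def by (intro Least_equality) auto
    then show ?thesis using True by simp
  next
    case False
    let ?m = "Max (set w)"
    have M: "Max (set (x # w)) = ?m" using mx False by simp
    obtain i where i: "i < length w" "w ! i = ?m" using Max_in[OF fin] by (auto simp: in_set_conv_nth)
    have "LL (x # w) = (LEAST i. i < length (x # w) \<and> (x # w) ! i = ?m)"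
      unfolding left_of_last_ltr_max_def M ..
    also have "\<dots> = Suc (LEAST j. Suc j < length (x # w) \<and> (x # w) ! Suc j = ?m)"
      by (rule Least_Suc[of _ "Suc i"]) (use i False in auto)
    also have "\<dots> = Suc (LL w)" unfolding left_of_last_ltr_max_def by simp
    finally show ?thesis using False by simp
  qed
qed

definition TT :: "real \<Rightarrow> nat \<Rightarrow> nat \<Rightarrow> real" where
  "TT q M n = (\<Sum>w\<in>BB M n. if M \<in> set w then word_prob q w * real (LL w) else 0)"

lemma TT_1: "TT q M 1 = 0"
proof -
  have "\<And>w. w \<in> BB M 1 \<Longrightarrow> LL w = 0"
    by (auto simp: BB_def length_Suc_conv LL_single)
  then show ?thesis unfolding TT_def by (intro sum.neutral) auto
qed

lemma TT_Suc:
  assumes n: "1 \<le> n" and M: "1 \<le> M"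
  shows "TT q M (Suc n) = (1 - q^(M-1)) * (TT q M n + ((1 - q^M)^n - (1 - q^(M-1))^n))"
proof -
  let ?g = "\<lambda>w. if M \<in> set w then word_prob q w * real (LL w) else 0"
  let ?h = "\<lambda>w. if M \<in> set w then word_prob q w * (1 + real (LL w)) else 0"
  have key: "?g (x # w) = (if x = M then 0 else pr q x * ?h w)" if x: "x \<in> {1..M}" and w: "w \<in> BB M n" for x w
  proof -
    have wne: "w \<noteq> []" using w n by (auto simp: BB_def)
    have sw: "set w \<subseteq> {1..M}" using w by (auto simp: BB_def)
    have le: "Max (set w) \<le> M" using sw wne by (auto intro!: Max.boundedI)
    show ?thesis
    proof (cases "x = M")
      case True
      then show ?thesis using LL_Cons[OF wne, of x] le by simp
    next
      case False
      show ?thesis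
      proof (cases "M \<in> set w")
        case True
        then have "Max (set w) = M" using le by (simp add: antisym)
        then have "LL (x # w) = Suc (LL w)" using LL_Cons[OF wne, of x] False x by auto
        then show ?thesis using True False by (simp add: algebra_simps)
      next
        case f2: False
        then show ?thesis using False by simp
      qed
    qed
  qed
  have "TT q M (Suc n) = (\<Sum>x\<in>{1..M}. \<Sum>w\<in>BB M n. ?g (x # w))"
    unfolding TT_def by (rule sum_BB_Suc)
  also have "\<dots> = (\<Sum>x\<in>{1..M}. \<Sum>w\<in>BB M n. (if x = M then 0 else pr q x * ?h w))"
    by (intro sum.cong refl key)
  also have "\<dots> = (\<Sum>x\<in>{1..M-1}. \<Sum>w\<in>BB M n. pr q x * ?h w)"
  proof -
    have e: "{1..M} = insert M {1..M-1}" using M by auto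
    have "(\<Sum>x\<in>{1..M}. \<Sum>w\<in>BB M n. (if x = M then 0 else pr q x * ?h w)) =
          (\<Sum>x\<in>{1..M-1}. \<Sum>w\<in>BB M n. (if x = M then 0 else pr q x * ?h w))"
      unfolding e using M by (subst sum.insert) auto
    also have "\<dots> = (\<Sum>x\<in>{1..M-1}. \<Sum>w\<in>BB M n. pr q x * ?h w)"
      by (intro sum.cong refl) auto
    finally show ?thesis .
  qed
  also have "\<dots> = (\<Sum>x\<in>{1..M-1}. pr q x) * (\<Sum>w\<in>BB M n. ?h w)"
    by (rule sum_product[symmetric])
  also have "(\<Sum>w\<in>BB M n. ?h w) = TT q M n + ((1 - q^M)^n - (1 - q^(M-1))^n)"
  proof -
    have "(\<Sum>w\<in>BB M n. ?h w) = TT q M n + (\<Sum>w\<in>BB M n. if M \<in> set w then word_prob q w else 0)"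
      unfolding TT_def sum.distrib[symmetric] by (rule sum.cong) (auto simp: algebra_simps)
    then show ?thesis using sum_wp_M[OF M] by simp
  qed
  finally show ?thesis using sum_pr[of q "M-1"] by simp
qed

lemma TT_closed:
  assumes q: "0 < q" "q < 1" and n: "1 \<le> n" and M: "1 \<le> M"
  shows "TT q M n = Cf q n M"
  using n
proof (induction n rule: dec_induct)
  case base
  have ne: "(1 - q^M) - (1 - q^(M-1)) \<noteq> 0"
  proof -
    obtain j where j: "M = Suc j" using M by (cases M) auto
    have "q^(Suc j) < q^j" using q by simp
    then show ?thesis using j q by simp
  qed
  have "Cf q 1 M = 0"
    unfolding Cf_def using ne by (simp add: power2_eq_square field_simps)
  then show ?case using TT_1 by simp
next
  case (step n)
  have ne: "(1 - q^M) - (1 - q^(M-1)) \<noteq> 0"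
  proof -
    obtain j where j: "M = Suc j" using M by (cases M) auto
    have "q^(Suc j) < q^j" using q by simp
    then show ?thesis using j q by simp
  qed
  have "TT q M (Suc n) = (1 - q^(M-1)) * (Cf q n M + ((1 - q^M)^n - (1 - q^(M-1))^n))"
    using TT_Suc[OF step(1) M] step(3) by simp
  also have "\<dots> = Cf q (Suc n) M"
    unfolding Cf_def using ne
    apply (simp add: divide_simps)
    apply (simp add: algebra_simps)
    done
  finally show ?case .
qed



lemma sum_BB_total:
  assumes q: "0 < q" "q < 1" and n: "1 \<le> n"
  shows "(\<Sum>w\<in>BB M n. word_prob q w * real (LL w)) = (\<Sum>j<M. Cf q n (Suc j))"
proof (induction M)
  case 0
  have "BB 0 n = {}" using n by (auto simp: BB_def)
  then show ?case by simp
next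
  case (Suc M)
  let ?f = "\<lambda>w. word_prob q w * real (LL w)"
  have "(\<Sum>w\<in>BB (Suc M) n. ?f w) = (\<Sum>w\<in>BB (Suc M) n. if Suc M \<in> set w then ?f w else 0)
        + (\<Sum>w\<in>BB (Suc M) n. if Suc M \<notin> set w then ?f w else 0)"
    unfolding sum.distrib[symmetric] by (rule sum.cong) auto
  also have "(\<Sum>w\<in>BB (Suc M) n. if Suc M \<in> set w then ?f w else 0) = Cf q n (Suc M)"
    using TT_closed[OF q n, of "Suc M"] unfolding TT_def by simp
  also have "(\<Sum>w\<in>BB (Suc M) n. if Suc M \<notin> set w then ?f w else 0) = (\<Sum>w\<in>BB M n. ?f w)"
    using BB_filter[of "Suc M" n] by (simp add: sum.inter_filter[symmetric])
  finally show ?case using Suc by simp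
qed

lemma exhaust:
  fixes f :: "'a \<Rightarrow> real"
  assumes nn: "\<And>x. x\<in>A \<Longrightarrow> 0 \<le> f x" and fin: "\<And>M. finite (B M)" and sub: "\<And>M. B M \<subseteq> A"
    and mono: "\<And>M. B M \<subseteq> B (Suc M)" and cov: "\<And>F. finite F \<Longrightarrow> F \<subseteq> A \<Longrightarrow> \<exists>M. F \<subseteq> B M"
    and lim: "(\<lambda>M. sum f (B M)) \<longlonglongrightarrow> S"
  shows "(f has_sum S) A"
proof -
  have inc: "incseq (\<lambda>M. sum f (B M))"
  proof (rule incseq_SucI)
    fix M show "sum f (B M) \<le> sum f (B (Suc M))"
    proof (rule sum_mono2[OF fin mono])
      fix b assume "b \<in> B (Suc M) - B M"
      then have "b \<in> A" using sub[of "Suc M"] by blast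
      then show "0 \<le> f b" by (rule nn)
    qed
  qed
  have le: "sum f (B M) \<le> S" for M using incseq_le[OF inc lim] .
  have bdd: "sum f G \<le> S" if G: "finite G" "G \<subseteq> A" for G
  proof -
    obtain M where M: "G \<subseteq> B M" using cov[OF G] by blast
    have "sum f G \<le> sum f (B M)"
    proof (rule sum_mono2[OF fin M])
      fix b assume "b \<in> B M - G"
      then have "b \<in> A" using sub[of M] by blast
      then show "0 \<le> f b" by (rule nn)
    qed
    then show ?thesis using le[of M] by simp
  qed
  have summ: "f summable_on A"
  proof (rule nonneg_bdd_above_summable_on)
    show "0 \<le> f x" if "x \<in> A" for x using nn that .
    show "bdd_above (sum f ` {F. F \<subseteq> A \<and> finite F})"
    proof (rule bdd_aboveI)
      fix y assume "y \<in> sum f ` {F. F \<subseteq> A \<and> finite F}"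
      then obtain G where "G \<subseteq> A" "finite G" "y = sum f G" by auto
      then show "y \<le> S" using bdd by simp
    qed
  qed
  have u: "infsum f A \<le> S" by (rule infsum_le_finite_sums[OF summ bdd])
  have l: "S \<le> infsum f A"
  proof (rule LIMSEQ_le_const2[OF lim])
    show "\<exists>N. \<forall>n\<ge>N. sum f (B n) \<le> infsum f A"
    proof -
      have "sum f (B M) \<le> infsum f A" for M
      proof (rule finite_sum_le_infsum[OF summ fin sub])
        fix x assume "x \<in> A - B M"
        then show "0 \<le> f x" using nn by blast
      qed
      then show ?thesis by blast
    qed
  qed
  show ?thesis using summ u l by (simp add: has_sum_iff)
qed


theorem mainTheorem5:
  fixes q :: real and n :: nat
  assumes "0 < q" and "q < 1" and "2 \<le> n"
  defines "Q \<equiv> 1 / q"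
  shows "F q n = (\<Sum>k=2..n. real (n choose k) * (-1) ^ k *
            (real (k - 1) / (Q ^ (k - 1) - 1) - real k / (Q ^ k - 1)))"
proof -
  have q: "0 < q" "q < 1" using assms by auto
  have n1: "1 \<le> n" using assms by simp
  let ?f = "\<lambda>w. word_prob q w * real (LL w)"
  let ?S = "(\<Sum>k=2..n. real (n choose k) * (-1) ^ k *
            (real (k - 1) / ((1/q) ^ (k - 1) - 1) - real k / ((1/q) ^ k - 1)))"
  have hs: "(?f has_sum ?S) (words n)"
  proof (rule exhaust[where B = "\<lambda>M. BB M n"])
    show "0 \<le> ?f w" if "w \<in> words n" for w using wp_nonneg[of q w] q by simp
    show "finite (BB M n)" for M by simp
    show "BB M n \<subseteq> words n" for M by (auto simp: BB_def words_def)
    show "BB M n \<subseteq> BB (Suc M) n" for M by (auto simp: BB_def)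
    show "\<exists>M. G \<subseteq> BB M n" if G: "finite G" "G \<subseteq> words n" for G
    proof -
      define M where "M = Max (insert 0 (\<Union>w\<in>G. set w))"
      have fin: "finite (insert 0 (\<Union>w\<in>G. set w))" using G by auto
      have "G \<subseteq> BB M n"
      proof
        fix w assume w: "w \<in> G"
        have "x \<le> M" if "x \<in> set w" for x unfolding M_def using fin that w by (intro Max_ge) auto
        then show "w \<in> BB M n" using w G by (auto simp: BB_def words_def)
      qed
      then show ?thesis by blast
    qed
    show "(\<lambda>M. sum ?f (BB M n)) \<longlonglongrightarrow> ?S"
      using series_main[OF q assms(3)] unfolding sums_def sum_BB_total[OF q n1] .
  qed
  show ?thesis unfolding F_def Q_def using hs by (simp add: has_sum_iff)
qed

end
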